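(* Let $n\ge 2$, let $P_n$ be the path with vertices $x_1,\dots,x_n$ and edges $\{x_i,x_{i+1}\}$, let $\mathcal C$ be a maximal independent set of $P_n$ with $c:=|\mathcal C|$, and let $G$ be the $\mathcal C$-suspension of $P_n$. Let $\alpha:=\lceil n/2\rceil$, $\delta_0=0$ if $x_1\in\mathcal C$ and $1$ otherwise, $\delta_t=0$ if $x_n\in\mathcal C$ and $1$ otherwise, and $\delta:=\delta_0+\delta_t$. Then $G$ is pseudo-Gorenstein$^{*}$ if and only if one of the following holds: (a) $n\equiv 0,2,9,11\pmod{12}$ and $c+\delta\le\alpha$; (b) $n\equiv 3,5,6,8\pmod{12}$ and $c+\delta=\alpha+1$; (c) $n\equiv 1,4\pmod{12}$ and $\mathcal C=\{x_1,x_4,\dots,x_n\}$.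
   Context: For $\varnothing\ne C\subseteq V(G)$, the $C$-suspension of $G$ is obtained by adding a new vertex $z$ adjacent exactly to the vertices of $C$. For a finite simple graph $G$ on vertex set $[N]$, let $S=K[y_1,\dots,y_N]$ ($K$ a field) and $I(G)$ the edge ideal generated by $y_iy_j$, $\{i,j\}\in E(G)$. Let $\alpha(G)$ be the independence number (equal to $\dim S/I(G)$). Write the Hilbert series of $S/I(G)$ uniquely as $(h_0+\dots+h_st^s)/(1-t)^{\alpha(G)}$ with $h_s\ne 0$, and $\mathfrak a(G)=s-\alpha(G)$. $G$ is pseudo-Gorenstein$^{*}$ if $h_s=1$ and $\mathfrak a(G)=0$. *)

theory Defs
  imports "HOL-Library.Multiset" "HOL-Computational_Algebra.Polynomial_FPS"
begin

text \<open>A finite simple graph is given by a vertex set V and an edge set E of 2-element subsets of V.\<close>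

definition independent :: "'a set \<Rightarrow> 'a set set \<Rightarrow> 'a set \<Rightarrow> bool" where
  "independent V E S \<longleftrightarrow> S \<subseteq> V \<and> (\<forall>e\<in>E. \<not> e \<subseteq> S)"

definition maximal_independent :: "'a set \<Rightarrow> 'a set set \<Rightarrow> 'a set \<Rightarrow> bool" where
  "maximal_independent V E C \<longleftrightarrow> independent V E C \<and>
     (\<forall>S. independent V E S \<and> C \<subseteq> S \<longrightarrow> S = C)"

definition indep_number :: "'a set \<Rightarrow> 'a set set \<Rightarrow> nat" where
  "indep_number V E = Max (card ` {S. independent V E S})"

definition path_V :: "nat \<Rightarrow> nat set" where
  "path_V n = {1..n}"

definition path_E :: "nat \<Rightarrow> nat set set" where
  "path_E n = {{i, i + 1} | i. 1 \<le> i \<and> i < n}"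

text \<open>C-suspension: old vertices are Some v, the new vertex z is None.\<close>
definition susp_V :: "'a set \<Rightarrow> 'a option set" where
  "susp_V V = insert None (Some ` V)"

definition susp_E :: "'a set set \<Rightarrow> 'a set \<Rightarrow> 'a option set set" where
  "susp_E E C = (\<lambda>e. Some ` e) ` E \<union> {{None, Some c} | c. c \<in> C}"

text \<open>Hilbert function of S/I(G): dimension of the degree-d part, i.e. the number of
  monomials (multisets of variables) of degree d not lying in the monomial ideal I(G),
  i.e. whose support contains no edge.\<close>
definition hilbert_fun :: "'a set \<Rightarrow> 'a set set \<Rightarrow> nat \<Rightarrow> nat" where
  "hilbert_fun V E d = card {M :: 'a multiset. set_mset M \<subseteq> V \<and> size M = d \<and>
       (\<forall>e\<in>E. \<not> e \<subseteq> set_mset M)}"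

definition hilbert_series :: "'a set \<Rightarrow> 'a set set \<Rightarrow> int fps" where
  "hilbert_series V E = Abs_fps (\<lambda>d. int (hilbert_fun V E d))"

definition h_poly :: "'a set \<Rightarrow> 'a set set \<Rightarrow> int poly" where
  "h_poly V E = (THE p. fps_of_poly p = hilbert_series V E * (1 - fps_X) ^ indep_number V E)"

definition a_invariant :: "'a set \<Rightarrow> 'a set set \<Rightarrow> int" where
  "a_invariant V E = int (degree (h_poly V E)) - int (indep_number V E)"

definition pseudo_gorenstein_star :: "'a set \<Rightarrow> 'a set set \<Rightarrow> bool" where
  "pseudo_gorenstein_star V E \<longleftrightarrow> lead_coeff (h_poly V E) = 1 \<and> a_invariant V E = 0"

end

theory Submission
  imports Defs
begin

definition supp_cnt :: "'a set \<Rightarrow> nat \<Rightarrow> nat" where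
  "supp_cnt F k = card {M :: 'a multiset. set_mset M = F \<and> size M = k}"

definition Bf :: "'a set \<Rightarrow> int fps" where
  "Bf F = Abs_fps (\<lambda>k. int (supp_cnt F k))"

lemma finite_supp_set: "finite F \<Longrightarrow> finite {M :: 'a multiset. set_mset M = F \<and> size M = k}"
  by (rule finite_subset[OF _ finite_multisets_of_size[of F k]]) (auto simp: multisets_of_size_def)

lemma supp_cnt_empty: "supp_cnt {} k = (if k = 0 then 1 else 0)"
proof -
  have "{M :: 'a multiset. set_mset M = {} \<and> size M = k} = (if k = 0 then {{#}} else {})"
    by auto
  then show ?thesis by (simp add: supp_cnt_def)
qed

lemma supp_cnt_insert0: "supp_cnt (insert a F) 0 = 0"
proof -
  have "{M :: 'a multiset. set_mset M = insert a F \<and> size M = 0} = {}" by auto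
  then show ?thesis by (simp add: supp_cnt_def)
qed

lemma supp_cnt_insert:
  assumes "finite F" "a \<notin> F"
  shows "supp_cnt (insert a F) (Suc k) = supp_cnt (insert a F) k + supp_cnt F k"
proof -
  let ?S1 = "{M :: 'a multiset. set_mset M = insert a F \<and> size M = k}"
  let ?S2 = "{M :: 'a multiset. set_mset M = F \<and> size M = k}"
  have eq: "{M :: 'a multiset. set_mset M = insert a F \<and> size M = Suc k} = add_mset a ` (?S1 \<union> ?S2)"
  proof (rule set_eqI, rule iffI)
    fix M assume M: "M \<in> {M :: 'a multiset. set_mset M = insert a F \<and> size M = Suc k}"
    then have aM: "a \<in># M" by auto
    let ?M' = "M - {#a#}"
    have MM: "M = add_mset a ?M'" using aM by simp
    have sz: "size ?M' = k" using M aM by (simp add: size_Diff_singleton)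
    have "set_mset ?M' = insert a F \<or> set_mset ?M' = F"
    proof -
      have "set_mset M = insert a (set_mset ?M')" using MM by (metis set_mset_add_mset_insert)
      then have "insert a (set_mset ?M') = insert a F" using M by simp
      then show ?thesis using assms(2) by (metis insert_absorb insert_ident)
    qed
    then have "?M' \<in> ?S1 \<union> ?S2" using sz by blast
    from imageI[OF this, of "add_mset a"] show "M \<in> add_mset a ` (?S1 \<union> ?S2)" using aM by simp
  next
    fix M assume "M \<in> add_mset a ` (?S1 \<union> ?S2)"
    then obtain M' where MM: "M = add_mset a M'" and M': "M' \<in> ?S1 \<union> ?S2" by blast
    have "set_mset M = insert a F" using M' unfolding MM by auto
    moreover have "size M = Suc k" using M' unfolding MM by auto
    ultimately show "M \<in> {M :: 'a multiset. set_mset M = insert a F \<and> size M = Suc k}" by blast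
  qed
  have "card (add_mset a ` (?S1 \<union> ?S2)) = card (?S1 \<union> ?S2)"
    by (rule card_image) (auto simp: inj_on_def)
  also have "\<dots> = card ?S1 + card ?S2"
  proof (rule card_Un_disjoint)
    show "finite ?S1" by (rule finite_supp_set) (use assms in simp)
    show "finite ?S2" by (rule finite_supp_set) (use assms in simp)
    show "?S1 \<inter> ?S2 = {}" using assms(2) by blast
  qed
  finally show ?thesis unfolding supp_cnt_def eq .
qed

lemma Bf_empty: "Bf {} = 1"
  by (rule fps_ext) (simp add: Bf_def supp_cnt_empty)

lemma Bf_insert:
  assumes "finite F" "a \<notin> F"
  shows "Bf (insert a F) * (1 - fps_X) = fps_X * Bf F"
proof (rule fps_ext)
  fix k
  show "fps_nth (Bf (insert a F) * (1 - fps_X)) k = fps_nth (fps_X * Bf F) k"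
  proof (cases k)
    case 0 then show ?thesis by (simp add: Bf_def algebra_simps supp_cnt_insert0)
  next
    case (Suc j) then show ?thesis
      by (simp add: Bf_def algebra_simps supp_cnt_insert[OF assms])
  qed
qed

lemma Bf_pow: "finite F \<Longrightarrow> Bf F * (1 - fps_X) ^ card F = fps_X ^ card F"
proof (induction F rule: finite_induct)
  case empty then show ?case by (simp add: Bf_empty)
next
  case (insert a F)
  have "Bf (insert a F) * (1 - fps_X) ^ card (insert a F) =
        (Bf (insert a F) * (1 - fps_X)) * (1 - fps_X) ^ card F"
    using insert by (simp add: mult.assoc)
  also have "\<dots> = fps_X * (Bf F * (1 - fps_X) ^ card F)"
    unfolding Bf_insert[OF insert(1,2)] by (simp add: mult.assoc)
  finally show ?case using insert by (simp add: mult.assoc)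
qed

lemma finite_indeps: "finite V \<Longrightarrow> finite {S. independent V E S}"
  by (rule finite_subset[of _ "Pow V"]) (auto simp: independent_def)

lemma empty_indep: "independent V E {} \<longleftrightarrow> (\<forall>e\<in>E. e \<noteq> {})"
  by (auto simp: independent_def)

lemma hs_decomp:
  assumes "finite V"
  shows "hilbert_series V E = (\<Sum>F\<in>{S. independent V E S}. Bf F)"
proof (rule fps_ext)
  fix k
  let ?I = "{S. independent V E S}"
  have eq: "{M :: 'a multiset. set_mset M \<subseteq> V \<and> size M = k \<and> (\<forall>e\<in>E. \<not> e \<subseteq> set_mset M)}
      = (\<Union>F\<in>?I. {M. set_mset M = F \<and> size M = k})"
    by (auto simp: independent_def)
  have fin: "\<forall>F\<in>?I. finite {M :: 'a multiset. set_mset M = F \<and> size M = k}"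
    using assms by (auto simp: independent_def intro!: finite_supp_set dest: finite_subset)
  have "hilbert_fun V E k = (\<Sum>F\<in>?I. supp_cnt F k)"
    unfolding hilbert_fun_def eq supp_cnt_def
    by (rule card_UN_disjoint[OF finite_indeps[OF assms] fin]) blast
  then show "fps_nth (hilbert_series V E) k = fps_nth (\<Sum>F\<in>?I. Bf F) k"
    by (simp add: hilbert_series_def fps_sum_nth Bf_def)
qed

lemma fps_of_poly_1mX: "fps_of_poly [:1, -1:] = (1 - fps_X :: int fps)"
  by (rule fps_ext) (auto simp: coeff_pCons fps_X_def split: nat.split)

definition hp :: "'a set \<Rightarrow> 'a set set \<Rightarrow> int poly" where
  "hp V E = (\<Sum>F\<in>{S. independent V E S}. monom 1 (card F) * [:1, -1:] ^ (indep_number V E - card F))"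

lemma card_le_indep_number:
  "finite V \<Longrightarrow> independent V E F \<Longrightarrow> card F \<le> indep_number V E"
  unfolding indep_number_def by (rule Max_ge) (auto intro: finite_indeps)

lemma h_poly_eq:
  assumes "finite V"
  shows "h_poly V E = hp V E"
proof -
  let ?I = "{S. independent V E S}"
  let ?d = "indep_number V E"
  have H: "fps_of_poly (hp V E) = hilbert_series V E * (1 - fps_X) ^ ?d"
  proof -
    have "hilbert_series V E * (1 - fps_X) ^ ?d = (\<Sum>F\<in>?I. Bf F * (1 - fps_X) ^ ?d)"
      by (simp add: hs_decomp[OF assms] sum_distrib_right)
    also have "\<dots> = (\<Sum>F\<in>?I. fps_X ^ card F * (1 - fps_X) ^ (?d - card F))"
    proof (rule sum.cong[OF refl])
      fix F assume F: "F \<in> ?I"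
      then have le: "card F \<le> ?d" using card_le_indep_number[OF assms] by blast
      have finF: "finite F" using F assms by (auto simp: independent_def dest: finite_subset)
      have "(1 - fps_X :: int fps) ^ ?d = (1 - fps_X) ^ card F * (1 - fps_X) ^ (?d - card F)"
        using le by (metis le_add_diff_inverse power_add)
      then show "Bf F * (1 - fps_X) ^ ?d = fps_X ^ card F * (1 - fps_X) ^ (?d - card F)"
        using Bf_pow[OF finF] by (metis mult.assoc)
    qed
    also have "\<dots> = fps_of_poly (hp V E)"
      by (simp add: hp_def fps_of_poly_sum fps_of_poly_mult fps_of_poly_power fps_of_poly_monom' fps_of_poly_1mX)
    finally show ?thesis by simp
  qed
  show ?thesis unfolding h_poly_def
  proof (rule the_equality)
    show "fps_of_poly (hp V E) = hilbert_series V E * (1 - fps_X) ^ ?d" by (rule H)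
  next
    fix p assume "fps_of_poly p = hilbert_series V E * (1 - fps_X) ^ ?d"
    then show "p = hp V E" using H fps_of_poly_eq_iff by metis
  qed
qed

lemma degree_hp: "finite V \<Longrightarrow> degree (hp V E) \<le> indep_number V E"
  unfolding hp_def
proof (rule degree_sum_le)
  fix F assume "finite V" "F \<in> {S. independent V E S}"
  then have le: "card F \<le> indep_number V E" using card_le_indep_number by blast
  have "degree (monom (1::int) (card F) * [:1, -1:] ^ (indep_number V E - card F))
     \<le> card F + degree ([:1, -1:] ^ (indep_number V E - card F) :: int poly)"
    by (rule order.trans[OF degree_mult_le]) (simp add: degree_monom_le)
  also have "\<dots> \<le> card F + (indep_number V E - card F)"
    using degree_power_le[of "[:1, -1::int:]" "indep_number V E - card F"] by simp
  finally show "degree (monom (1::int) (card F) * [:1, -1:] ^ (indep_number V E - card F)) \<le> indep_number V E"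
    using le by simp
qed (auto intro: finite_indeps)

lemma coeff_hp: "finite V \<Longrightarrow> coeff (hp V E) (indep_number V E) =
   (\<Sum>F\<in>{S. independent V E S}. (-1) ^ (indep_number V E - card F))"
  unfolding hp_def coeff_sum
proof (rule sum.cong[OF refl])
  fix F assume "finite V" "F \<in> {S. independent V E S}"
  then have le: "card F \<le> indep_number V E" using card_le_indep_number by blast
  let ?m = "indep_number V E - card F"
  have ne: "[:1, -1::int:] \<noteq> 0" by simp
  have dg: "degree ([:1, -1::int:] ^ ?m) = ?m" using degree_power_eq[OF ne] by simp
  have "lead_coeff ([:1, -1::int:] ^ ?m) = (-1) ^ ?m"
    by (simp add: lead_coeff_power)
  then have cf: "coeff ([:1, -1::int:] ^ ?m) ?m = (-1) ^ ?m"
    using dg by simp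
  then show "coeff (monom (1::int) (card F) * [:1, -1:] ^ ?m) (indep_number V E) = (-1) ^ ?m"
  proof -
    have "coeff (monom 1 (card F) * [:1, -1:] ^ ?m) (indep_number V E) = coeff ([:1, -1::int:] ^ ?m) ?m"
      using le by (simp add: coeff_monom_mult)
    then show ?thesis using cf by simp
  qed
qed

lemma pg_iff:
  assumes "finite V"
  shows "pseudo_gorenstein_star V E \<longleftrightarrow>
    (\<Sum>F\<in>{S. independent V E S}. (-1::int) ^ (indep_number V E - card F)) = 1"
proof -
  let ?d = "indep_number V E"
  let ?p = "hp V E"
  have dg: "degree ?p \<le> ?d" by (rule degree_hp[OF assms])
  have "pseudo_gorenstein_star V E \<longleftrightarrow> lead_coeff ?p = 1 \<and> degree ?p = ?d"
    unfolding pseudo_gorenstein_star_def a_invariant_def h_poly_eq[OF assms] by linarith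
  also have "\<dots> \<longleftrightarrow> coeff ?p ?d = 1"
  proof
    assume "coeff ?p ?d = 1"
    then have "?d \<le> degree ?p" by (intro le_degree) simp
    with dg have "degree ?p = ?d" by simp
    with \<open>coeff ?p ?d = 1\<close> show "lead_coeff ?p = 1 \<and> degree ?p = ?d" by simp
  qed auto
  finally show ?thesis using coeff_hp[OF assms] by simp
qed

definition ind :: "nat set \<Rightarrow> nat set set" where
  "ind U = {S. S \<subseteq> U \<and> (\<forall>i\<in>S. Suc i \<notin> S)}"
definition ee :: "nat set \<Rightarrow> int" where
  "ee U = (\<Sum>S\<in>ind U. (-1) ^ card S)"
definition aa :: "nat set \<Rightarrow> nat" where
  "aa U = Max (card ` ind U)"

lemma finite_ind: "finite U \<Longrightarrow> finite (ind U)"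
  by (rule finite_subset[of _ "Pow U"]) (auto simp: ind_def)

lemma empty_ind: "{} \<in> ind U" by (simp add: ind_def)

lemma aa_props:
  assumes "finite U"
  shows "\<exists>S\<in>ind U. card S = aa U" "\<And>S. S \<in> ind U \<Longrightarrow> card S \<le> aa U"
proof -
  have fin: "finite (card ` ind U)" using finite_ind[OF assms] by simp
  have ne: "card ` ind U \<noteq> {}" using empty_ind by blast
  show "\<exists>S\<in>ind U. card S = aa U" using Max_in[OF fin ne] unfolding aa_def by auto
  show "\<And>S. S \<in> ind U \<Longrightarrow> card S \<le> aa U" unfolding aa_def using fin by (auto intro: Max_ge)
qed

lemma aa_eqI:
  assumes "finite U" "S \<in> ind U" "card S = k" "\<And>T. T \<in> ind U \<Longrightarrow> card T \<le> k"
  shows "aa U = k"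
  using aa_props[OF assms(1)] assms(2-4) by (metis le_antisym)

lemma ind_split:
  assumes "m \<in> U" "Suc m \<notin> U" "m \<ge> 1"
  shows "ind U = ind (U - {m}) \<union> insert m ` ind (U - {m, m - 1})"
proof (rule set_eqI, rule iffI)
  fix S assume S: "S \<in> ind U"
  show "S \<in> ind (U - {m}) \<union> insert m ` ind (U - {m, m - 1})"
  proof (cases "m \<in> S")
    case False then show ?thesis using S by (auto simp: ind_def)
  next
    case True
    have sm: "Suc (m - 1) = m" using assms(3) by simp
    have "m - 1 \<notin> S"
    proof
      assume "m - 1 \<in> S"
      then have "Suc (m - 1) \<notin> S" using S unfolding ind_def by blast
      then show False using sm True by simp
    qed
    then have "S - {m} \<in> ind (U - {m, m - 1})" using S by (auto simp: ind_def)
    moreover have "S = insert m (S - {m})" using True by auto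
    ultimately show ?thesis by blast
  qed
next
  fix S assume "S \<in> ind (U - {m}) \<union> insert m ` ind (U - {m, m - 1})"
  then show "S \<in> ind U"
  proof
    assume "S \<in> ind (U - {m})" then show ?thesis by (auto simp: ind_def)
  next
    assume "S \<in> insert m ` ind (U - {m, m - 1})"
    then obtain T where T: "T \<in> ind (U - {m, m - 1})" and ST: "S = insert m T" by blast
    have "\<forall>i\<in>S. Suc i \<notin> S"
    proof
      fix i assume i: "i \<in> S"
      show "Suc i \<notin> S"
      proof
        assume si: "Suc i \<in> S"
        show False
        proof (cases "i = m")
          case True then show False using si ST T assms(2) by (auto simp: ind_def)
        next
          case False
          then have iT: "i \<in> T" using i ST by auto
          show False
          proof (cases "Suc i = m")
            case True then have "i = m - 1" by auto
            then show False using iT T by (auto simp: ind_def)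
          next
            case False then have "Suc i \<in> T" using si ST by auto
            then show False using iT T by (auto simp: ind_def)
          qed
        qed
      qed
    qed
    moreover have "S \<subseteq> U" using T ST assms(1) by (auto simp: ind_def)
    ultimately show ?thesis by (simp add: ind_def)
  qed
qed

lemma ee_rec:
  assumes "finite U" "m \<in> U" "Suc m \<notin> U" "m \<ge> 1"
  shows "ee U = ee (U - {m}) - ee (U - {m, m - 1})"
proof -
  let ?A = "ind (U - {m})" and ?B = "ind (U - {m, m - 1})"
  have fA: "finite ?A" and fB: "finite ?B" using assms(1) by (auto intro: finite_ind)
  have disj: "?A \<inter> insert m ` ?B = {}" by (auto simp: ind_def)
  have inj: "inj_on (insert m) ?B" unfolding inj_on_def ind_def by blast
  have "ee U = (\<Sum>S\<in>?A. (-1::int) ^ card S) + (\<Sum>S\<in>insert m ` ?B. (-1) ^ card S)"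
    unfolding ee_def ind_split[OF assms(2-4)] using fA fB disj by (simp add: sum.union_disjoint)
  also have "(\<Sum>S\<in>insert m ` ?B. (-1::int) ^ card S) = (\<Sum>T\<in>?B. (-1) ^ card (insert m T))"
    using sum.reindex[OF inj] by simp
  also have "\<dots> = (\<Sum>T\<in>?B. - ((-1) ^ card T))"
  proof (rule sum.cong[OF refl])
    fix T assume "T \<in> ?B"
    then have "finite T" "m \<notin> T" using assms(1) by (auto simp: ind_def dest: finite_subset)
    then show "(-1::int) ^ card (insert m T) = - ((-1) ^ card T)" by simp
  qed
  finally show ?thesis by (simp add: ee_def sum_negf)
qed

lemma aa_rec:
  assumes "finite U" "m \<in> U" "Suc m \<notin> U" "m \<ge> 1"
  shows "aa U = max (aa (U - {m})) (Suc (aa (U - {m, m - 1})))"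
proof -
  let ?A = "ind (U - {m})" and ?B = "ind (U - {m, m - 1})"
  have fA: "finite (U - {m})" and fB: "finite (U - {m, m - 1})" using assms(1) by auto
  obtain SA where SA: "SA \<in> ?A" "card SA = aa (U - {m})" using aa_props(1)[OF fA] by blast
  obtain SB where SB: "SB \<in> ?B" "card SB = aa (U - {m, m - 1})" using aa_props(1)[OF fB] by blast
  have cardI: "card (insert m T) = Suc (card T)" if "T \<in> ?B" for T
  proof -
    have "finite T" "m \<notin> T" using that assms(1) by (auto simp: ind_def dest: finite_subset)
    then show ?thesis by simp
  qed
  have spl: "ind U = ?A \<union> insert m ` ?B" by (rule ind_split[OF assms(2-4)])
  show ?thesis
  proof (cases "aa (U - {m}) \<le> Suc (aa (U - {m, m - 1}))")
    case True
    have "aa U = Suc (aa (U - {m, m - 1}))"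
    proof (rule aa_eqI[OF assms(1)])
      show "insert m SB \<in> ind U" using SB spl by blast
      show "card (insert m SB) = Suc (aa (U - {m, m - 1}))" using cardI SB by simp
      fix T assume "T \<in> ind U"
      then show "card T \<le> Suc (aa (U - {m, m - 1}))" unfolding spl
        using aa_props(2)[OF fA] aa_props(2)[OF fB] cardI True by fastforce
    qed
    then show ?thesis using True by simp
  next
    case False
    have "aa U = aa (U - {m})"
    proof (rule aa_eqI[OF assms(1)])
      show "SA \<in> ind U" using SA spl by blast
      show "card SA = aa (U - {m})" using SA by simp
      fix T assume "T \<in> ind U"
      then show "card T \<le> aa (U - {m})" unfolding spl
        using aa_props(2)[OF fA] aa_props(2)[OF fB] cardI False by fastforce
    qed
    then show ?thesis using False by simp
  qed
qed

lemma ind_empty: "ind {} = {{}}" by (auto simp: ind_def)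
lemma ee_empty: "ee {} = 1" by (simp add: ee_def ind_empty)
lemma aa_empty: "aa {} = 0" by (simp add: aa_def ind_empty)

lemma ind_mono: "U \<subseteq> U' \<Longrightarrow> ind U \<subseteq> ind U'" by (auto simp: ind_def)

lemma aa_mono: "finite U' \<Longrightarrow> U \<subseteq> U' \<Longrightarrow> aa U \<le> aa U'"
proof -
  assume f: "finite U'" and s: "U \<subseteq> U'"
  have fU: "finite U" using f s by (rule finite_subset[rotated])
  obtain S where S: "S \<in> ind U" "card S = aa U" using aa_props(1)[OF fU] by blast
  have "S \<in> ind U'" using S(1) ind_mono[OF s] by blast
  then show "aa U \<le> aa U'" using aa_props(2)[OF f] S(2) by metis
qed

lemma isolated:
  assumes "finite U" "m \<in> U" "Suc m \<notin> U" "m \<ge> 1" "m - 1 \<notin> U"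
  shows "ee U = 0" "aa U = Suc (aa (U - {m}))"
proof -
  have e: "U - {m, m - 1} = U - {m}" using assms(5) by auto
  show "ee U = 0" using ee_rec[OF assms(1-4)] e by simp
  show "aa U = Suc (aa (U - {m}))" using aa_rec[OF assms(1-4)] e by simp
qed

definition pe :: "nat \<Rightarrow> int" where
  "pe n = (if n mod 6 \<in> {0, 5} then 1 else if n mod 6 \<in> {2, 3} then -1 else 0)"

lemma pe_rec: "pe (Suc (Suc m)) = pe (Suc m) - pe m"
proof -
  have "m mod 6 < 6" by simp
  then consider "m mod 6 = 0" | "m mod 6 = 1" | "m mod 6 = 2" | "m mod 6 = 3" | "m mod 6 = 4" | "m mod 6 = 5"
    by linarith
  then show ?thesis unfolding pe_def by cases (simp_all add: mod_Suc)
qed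

lemma path_vals: "aa {1..n} = (n + 1) div 2 \<and> ee {1..n} = pe n"
proof (induction n rule: less_induct)
  case (less n)
  show ?case
  proof (cases "n \<le> 1")
    case True
    then consider "n = 0" | "n = 1" by linarith
    then show ?thesis
    proof cases
      case 1 then show ?thesis by (simp add: aa_empty ee_empty pe_def)
    next
      case 2
      have "ee {1::nat} = 0" "aa {1::nat} = Suc (aa ({1} - {1}))"
        using isolated[of "{1::nat}" 1] by simp_all
      then show ?thesis using 2 by (simp add: aa_empty pe_def)
    qed
  next
    case False
    have r1: "{1..n} - {n} = {1..n - 1}" by auto
    have r2: "{1..n} - {n, n - 1} = {1..n - 2}" by auto
    have e: "ee {1..n} = ee {1..n-1} - ee {1..n-2}"
      using ee_rec[of "{1..n}" n] False r1 r2 by simp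
    have a: "aa {1..n} = max (aa {1..n-1}) (Suc (aa {1..n-2}))"
      using aa_rec[of "{1..n}" n] False r1 r2 by simp
    have IH1: "aa {1..n-1} = n div 2 \<and> ee {1..n-1} = pe (n - 1)"
      using less[of "n - 1"] False by simp
    have IH2: "aa {1..n-2} = (n - 1) div 2 \<and> ee {1..n-2} = pe (n - 2)"
      using less[of "n - 2"] False by (simp add: Suc_diff_Suc numeral_2_eq_2)
    have "pe n = pe (n - 1) - pe (n - 2)"
      using pe_rec[of "n - 2"] False by (simp add: Suc_diff_Suc numeral_2_eq_2)
    have m: "max (n div 2) (Suc ((n - 1) div 2)) = (n + 1) div 2" using False by presburger
    show ?thesis using e a IH1 IH2 m \<open>pe n = _\<close> by simp
  qed
qed

definition MI :: "nat \<Rightarrow> nat set \<Rightarrow> bool" where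
  "MI n C \<longleftrightarrow> C \<subseteq> {1..n} \<and> (\<forall>i\<in>C. Suc i \<notin> C) \<and> (\<forall>i\<in>{1..n}. i \<in> C \<or> i - 1 \<in> C \<or> Suc i \<in> C)"

definition sp :: "nat \<Rightarrow> nat set \<Rightarrow> bool" where
  "sp n C \<longleftrightarrow> n mod 3 = 1 \<and> C = {i. 1 \<le> i \<and> i \<le> n \<and> i mod 3 = 1}"

definition dl :: "nat \<Rightarrow> nat set \<Rightarrow> nat" where
  "dl n C = (if 1 \<in> C then 0 else 1) + (if n \<in> C then 0 else 1)"

lemma ar1: "((k::nat) + 2) mod 3 = 1 \<Longrightarrow> k mod 3 = 1 \<Longrightarrow> False" by presburger
lemma ar2: "((k::nat) + 3) mod 3 = 1 \<longleftrightarrow> k mod 3 = 1" by presburger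
lemma ar3: "(k::nat) mod 3 = 1 \<Longrightarrow> (1 \<le> x \<and> x \<le> k + 3 \<and> x mod 3 = 1 \<and> x \<noteq> k+3) \<longleftrightarrow> (1 \<le> x \<and> x \<le> k \<and> x mod 3 = 1)" by presburger
lemma ar4: "(k::nat) mod 3 = 1 \<Longrightarrow> (x = k + 3 \<or> (1 \<le> x \<and> x \<le> k \<and> x mod 3 = 1)) \<longleftrightarrow> (1 \<le> x \<and> x \<le> k + 3 \<and> x mod 3 = 1)" by presburger
lemma ar5: "(k::nat) \<ge> 1 \<Longrightarrow> (k + 3 - 1) div 3 = Suc ((k - 1) div 3)" by presburger

lemma MI_reduce:
  assumes MI: "MI n C" and nC: "n \<in> C" and le: "n' + 2 \<le> n" and sub: "C - {n} \<subseteq> {1..n'}"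
  shows "MI n' (C - {n})"
proof -
  have Cind: "\<And>i. i \<in> C \<Longrightarrow> Suc i \<notin> C"
    and Ccov: "\<And>i. 1 \<le> i \<Longrightarrow> i \<le> n \<Longrightarrow> i \<in> C \<or> i - 1 \<in> C \<or> Suc i \<in> C"
    using MI unfolding MI_def by auto
  have m2: "\<forall>i\<in>C - {n}. Suc i \<notin> C - {n}" using Cind by blast
  have m3: "\<forall>i\<in>{1..n'}. i \<in> C - {n} \<or> i - 1 \<in> C - {n} \<or> Suc i \<in> C - {n}"
  proof
    fix i assume "i \<in> {1..n'}"
    then have i1: "1 \<le> i" and i2: "i \<le> n" and i3: "i \<noteq> n" and i4: "i - 1 \<noteq> n" and i5: "Suc i \<noteq> n"
      using le by auto
    have "i \<in> C \<or> i - 1 \<in> C \<or> Suc i \<in> C" using i1 i2 by (rule Ccov)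
    then show "i \<in> C - {n} \<or> i - 1 \<in> C - {n} \<or> Suc i \<in> C - {n}" using i3 i4 i5 by blast
  qed
  show ?thesis unfolding MI_def using sub m2 m3 by blast
qed

lemma main_ind:
  "n \<ge> 1 \<Longrightarrow> MI n C \<Longrightarrow> aa ({1..n} - C) + 1 = card C + dl n C \<and>
     ee ({1..n} - C) = (if sp n C then (-1) ^ ((n - 1) div 3) else 0) \<and>
     (sp n C \<longrightarrow> 3 * card C = n + 2)"
proof (induction n arbitrary: C rule: less_induct)
  case (less n)
  note MI = less.prems(2)
  have Csub: "C \<subseteq> {1..n}" and Cind: "\<And>i. i \<in> C \<Longrightarrow> Suc i \<notin> C"
    and Ccov: "\<And>i. 1 \<le> i \<Longrightarrow> i \<le> n \<Longrightarrow> i \<in> C \<or> i - 1 \<in> C \<or> Suc i \<in> C"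
    using MI unfolding MI_def by auto
  have finC: "finite C" using Csub finite_subset by blast
  let ?W = "{1..n} - C"
  have finW: "finite ?W" by simp
  show ?case
  proof (cases "n = 1")
    case True
    have "1 \<in> C" using Ccov[of 1] True Csub by auto
    then have C1: "C = {1}" using Csub True by auto
    have "?W = {}" using C1 True by auto
    moreover have "sp n C" using C1 True unfolding sp_def by auto
    ultimately show ?thesis using C1 True by (simp add: aa_empty ee_empty dl_def)
  next
    case n1: False
    then have n2: "n \<ge> 2" using less.prems(1) by simp
    show ?thesis
    proof (cases "n \<in> C")
      case nC: False
      have sn: "Suc n \<notin> C" using Csub by auto
      have "1 \<le> n" using n2 by linarith
      then have "n \<in> C \<or> n - 1 \<in> C \<or> Suc n \<in> C" by (rule Ccov[OF _ order_refl])
      then have n1C: "n - 1 \<in> C" using sn nC by (simp only: simp_thms)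
      have m1: "C \<subseteq> {1..n - 1}"
      proof
        fix x assume x: "x \<in> C"
        then have "x \<in> {1..n}" "x \<noteq> n" using Csub nC by auto
        then show "x \<in> {1..n - 1}" by auto
      qed
      have m3: "\<forall>i\<in>{1..n - 1}. i \<in> C \<or> i - 1 \<in> C \<or> Suc i \<in> C"
      proof
        fix i assume "i \<in> {1..n - 1}"
        then have "1 \<le> i" "i \<le> n" by auto
        then show "i \<in> C \<or> i - 1 \<in> C \<or> Suc i \<in> C" by (rule Ccov)
      qed
      have MI': "MI (n - 1) C" unfolding MI_def using m1 m3 Cind by blast
      have IH: "aa ({1..n - 1} - C) + 1 = card C + dl (n - 1) C \<and>
        ee ({1..n - 1} - C) = (if sp (n - 1) C then (-1) ^ ((n - 1 - 1) div 3) else 0)"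
        using less.IH[of "n - 1" C] MI' n2 by simp
      have a1: "n \<in> ?W" using nC n2 by simp
      have a2: "Suc n \<notin> ?W" by simp
      have a3: "n - 1 \<notin> ?W" using n1C by simp
      have a4: "n \<ge> 1" using n2 by simp
      have iso: "ee ?W = 0" "aa ?W = Suc (aa (?W - {n}))"
        using isolated[OF finW a1 a2 a4 a3] by auto
      have WW: "?W - {n} = {1..n - 1} - C" by auto
      have d: "dl n C = dl (n - 1) C + 1" using nC n1C unfolding dl_def by simp
      have nsp: "\<not> sp n C" using nC less.prems(1) unfolding sp_def by auto
      show ?thesis using IH iso WW d nsp by simp
    next
      case nC: True
      have sn: "Suc (n - 1) = n" using n2 by simp
      have nm1: "n - 1 \<notin> C" using Cind[of "n - 1"] nC sn by auto
      have cardC: "card C = Suc (card (C - {n}))" using card_Suc_Diff1[OF finC nC] by simp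
      show ?thesis
      proof (cases "n = 2")
        case True
        have one: "1 \<notin> C" using nm1 True by simp
        have C2: "C = {2}"
        proof (rule set_eqI)
          fix x show "x \<in> C \<longleftrightarrow> x \<in> {2}"
          proof
            assume x: "x \<in> C"
            then have "1 \<le> x" "x \<le> 2" using Csub True by auto
            then have "x = 1 \<or> x = 2" by auto
            then show "x \<in> {2}" using one x by auto
          next
            assume "x \<in> {2}" then show "x \<in> C" using nC True by simp
          qed
        qed
        have W1: "?W = {1}" using C2 True by auto
        have "ee {1::nat} = 0" "aa {1::nat} = Suc (aa ({1} - {1}))"
          using isolated[of "{1::nat}" 1] by simp_all
        then have "ee ?W = 0" "aa ?W = 1" using W1 by (simp_all add: aa_empty)
        moreover have "\<not> sp n C" using True unfolding sp_def by simp
        moreover have "dl n C = 1" using C2 True unfolding dl_def by simp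
        ultimately show ?thesis using C2 by simp
      next
        case False
        then have n3: "n \<ge> 3" using n2 by simp
        have W1: "?W - {n - 1} = {1..n - 2} - (C - {n})"
        proof (rule set_eqI)
          fix x show "x \<in> ?W - {n - 1} \<longleftrightarrow> x \<in> {1..n - 2} - (C - {n})"
            using nC n3 by (cases "x = n") auto
        qed
        have a1: "n - 1 \<in> ?W" using nm1 n3 by simp
        have a2: "Suc (n - 1) \<notin> ?W" using sn nC by simp
        have a4: "n - 1 \<ge> 1" using n3 by simp
        show ?thesis
        proof (cases "n - 2 \<in> C")
          case True
          have sub: "C - {n} \<subseteq> {1..n - 2}"
          proof
            fix x assume x: "x \<in> C - {n}"
            then have "x \<in> {1..n}" "x \<noteq> n" "x \<noteq> n - 1" using Csub nm1 by auto
            then show "x \<in> {1..n - 2}" by auto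
          qed
          have MI': "MI (n - 2) (C - {n})" by (rule MI_reduce[OF MI nC _ sub]) (use n3 in simp)
          have IH: "aa ({1..n - 2} - (C - {n})) + 1 = card (C - {n}) + dl (n - 2) (C - {n})"
            using less.IH[of "n - 2" "C - {n}"] MI' n3 by simp
          have e2: "n - 1 - 1 = n - 2" by arith
          have a3: "n - 1 - 1 \<notin> ?W" unfolding e2 using True by simp
          have iso: "ee ?W = 0" "aa ?W = Suc (aa (?W - {n - 1}))"
            using isolated[OF finW a1 a2 a4 a3] by auto
          have d: "dl n C = dl (n - 2) (C - {n})" using nC True n3 unfolding dl_def by auto
          have nsp: "\<not> sp n C"
          proof
            assume "sp n C"
            then have m: "n mod 3 = 1" and CC: "C = {i. 1 \<le> i \<and> i \<le> n \<and> i mod 3 = 1}"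
              unfolding sp_def by blast+
            have "n - 2 \<in> {i. 1 \<le> i \<and> i \<le> n \<and> i mod 3 = 1}" using True unfolding CC .
            then have a: "(n - 2) mod 3 = 1" by blast
            have nn2: "n - 2 + 2 = n" using n3 by simp
            have "(n - 2 + 2) mod 3 = 1" unfolding nn2 by (rule m)
            then show False using ar1 a by blast
          qed
          show ?thesis using IH iso W1 d nsp cardC by simp
        next
          case False
          have "1 \<le> n - 2" "n - 2 \<le> n" using n3 by auto
          then have "n - 2 \<in> C \<or> n - 2 - 1 \<in> C \<or> Suc (n - 2) \<in> C" by (rule Ccov)
          moreover have "Suc (n - 2) = n - 1" using n3 by simp
          moreover have e3: "n - 2 - 1 = n - 3" by arith
          ultimately have n3C: "n - 3 \<in> C" using False nm1 by metis
          then have n4: "n \<ge> 4" using Csub by force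
          have sub: "C - {n} \<subseteq> {1..n - 3}"
          proof
            fix x assume x: "x \<in> C - {n}"
            then have "x \<in> {1..n}" "x \<noteq> n" "x \<noteq> n - 1" "x \<noteq> n - 2" using Csub nm1 False by auto
            then show "x \<in> {1..n - 3}" by auto
          qed
          have MI': "MI (n - 3) (C - {n})" by (rule MI_reduce[OF MI nC _ sub]) (use n4 in simp)
          have IH: "aa ({1..n - 3} - (C - {n})) + 1 = card (C - {n}) + dl (n - 3) (C - {n}) \<and>
             ee ({1..n - 3} - (C - {n})) = (if sp (n - 3) (C - {n}) then (-1) ^ ((n - 3 - 1) div 3) else 0) \<and>
             (sp (n - 3) (C - {n}) \<longrightarrow> 3 * card (C - {n}) = n - 3 + 2)"
            using less.IH[of "n - 3" "C - {n}"] MI' n4 by simp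
          let ?W1 = "{1..n - 2} - (C - {n})"
          let ?W2 = "{1..n - 3} - (C - {n})"
          have W2: "?W - {n - 1, n - 1 - 1} = ?W2"
          proof (rule set_eqI)
            fix x show "x \<in> ?W - {n - 1, n - 1 - 1} \<longleftrightarrow> x \<in> ?W2"
              using nC n4 by (cases "x = n") auto
          qed
          have W12: "?W1 - {n - 2} = ?W2"
          proof (rule set_eqI)
            fix x show "x \<in> ?W1 - {n - 2} \<longleftrightarrow> x \<in> ?W2"
              using n4 by auto
          qed
          have b1: "n - 2 \<in> ?W1" using False n4 by simp
          have b2: "Suc (n - 2) \<notin> ?W1" using n4 by simp
          have n3n: "n - 3 \<noteq> n" using n4 by arith
          have b3: "n - 2 - 1 \<notin> ?W1" unfolding e3 using n3C n3n by simp
          have b4: "n - 2 \<ge> 1" using n4 by simp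
          have iso: "ee ?W1 = 0" "aa ?W1 = Suc (aa (?W1 - {n - 2}))"
            using isolated[OF _ b1 b2 b4 b3] by auto
          have e: "ee ?W = ee (?W - {n - 1}) - ee (?W - {n - 1, n - 1 - 1})"
            by (rule ee_rec[OF finW a1 a2 a4])
          have a: "aa ?W = max (aa (?W - {n - 1})) (Suc (aa (?W - {n - 1, n - 1 - 1})))"
            by (rule aa_rec[OF finW a1 a2 a4])
          have eW: "ee ?W = - ee ?W2" using e iso W1 W2 by simp
          have aW: "aa ?W = Suc (aa ?W2)" using a iso W1 W2 W12 by simp
          have d: "dl n C = dl (n - 3) (C - {n})" using nC n3C n4 unfolding dl_def by auto
          have spq: "sp n C \<longleftrightarrow> sp (n - 3) (C - {n})"
          proof
            assume sp: "sp n C"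
            then have m: "n mod 3 = 1" and CC: "C = {i. 1 \<le> i \<and> i \<le> n \<and> i mod 3 = 1}"
              unfolding sp_def by auto
            have nn: "n - 3 + 3 = n" using n4 by simp
            have m': "(n - 3) mod 3 = 1" using ar2[of "n - 3"] m unfolding nn by simp
            have "C - {n} = {i. 1 \<le> i \<and> i \<le> n - 3 \<and> i mod 3 = 1}"
            proof (rule set_eqI)
              fix x
              have "(1 \<le> x \<and> x \<le> n \<and> x mod 3 = 1 \<and> x \<noteq> n) \<longleftrightarrow> (1 \<le> x \<and> x \<le> n - 3 \<and> x mod 3 = 1)"
                using ar3[OF m', of x] unfolding nn .
              then show "x \<in> C - {n} \<longleftrightarrow> x \<in> {i. 1 \<le> i \<and> i \<le> n - 3 \<and> i mod 3 = 1}"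
                unfolding CC by simp
            qed
            then show "sp (n - 3) (C - {n})" using m' unfolding sp_def by simp
          next
            assume sp: "sp (n - 3) (C - {n})"
            then have m': "(n - 3) mod 3 = 1" and CC: "C - {n} = {i. 1 \<le> i \<and> i \<le> n - 3 \<and> i mod 3 = 1}"
              unfolding sp_def by auto
            have nn: "n - 3 + 3 = n" using n4 by simp
            have m: "n mod 3 = 1" using ar2[of "n - 3"] m' unfolding nn by simp
            have "C = {i. 1 \<le> i \<and> i \<le> n \<and> i mod 3 = 1}"
            proof (rule set_eqI)
              fix x
              have "x \<in> C \<longleftrightarrow> x = n \<or> x \<in> C - {n}" using nC by blast
              also have "\<dots> \<longleftrightarrow> x = n \<or> (1 \<le> x \<and> x \<le> n - 3 \<and> x mod 3 = 1)" unfolding CC by simp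
              also have "\<dots> \<longleftrightarrow> (1 \<le> x \<and> x \<le> n \<and> x mod 3 = 1)" using ar4[OF m', of x] unfolding nn .
              finally show "x \<in> C \<longleftrightarrow> x \<in> {i. 1 \<le> i \<and> i \<le> n \<and> i mod 3 = 1}" by simp
            qed
            then show "sp n C" using m unfolding sp_def by simp
          qed
          have nn: "n - 3 + 3 = n" using n4 by simp
          have dv: "(n - 1) div 3 = Suc ((n - 3 - 1) div 3)" using ar5[of "n - 3"] n4 unfolding nn by simp
          show ?thesis using IH eW aW d spq dv cardC n4 nn by auto
        qed
      qed
    qed
  qed
qed

lemma F1: "even (((n::nat) + 1) div 2) \<longleftrightarrow> (n mod 4 = 0 \<or> n mod 4 = 3)" by presburger
lemma F2: "(m::nat) mod 3 = 0 \<Longrightarrow> even (m div 3) \<longleftrightarrow> m mod 6 = 0" by presburger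
lemma F3: "Suc m mod 3 = 1 \<Longrightarrow> (m::nat) mod 3 = 0" by presburger
lemma F4: "Suc m mod 6 = 1 \<longleftrightarrow> (m::nat) mod 6 = 0" by presburger
lemma F5: "(n::nat) \<le> 2 * ((n + 1) div 2)" by presburger
lemma F6: "(n::nat) \<ge> 2 \<Longrightarrow> n mod 3 = 1 \<Longrightarrow> n \<ge> 4" by presburger

lemma F7: "3*(w+1) = n+2 \<Longrightarrow> n \<le> 2*a \<Longrightarrow> 4 \<le> n \<Longrightarrow> Suc w \<le> (a::nat)" by presburger

lemma final:
  fixes n w c dl :: nat and s :: bool
  assumes n2: "n \<ge> 2" and wc: "w + 1 = c + dl" and wa: "w \<le> (n + 1) div 2"
    and s1: "s \<Longrightarrow> 3 * c = n + 2" and s2: "s \<Longrightarrow> dl = 0" and s3: "s \<Longrightarrow> n mod 3 = 1"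
  shows "((-1::int) ^ (max ((n + 1) div 2) (Suc w)) * (pe n - (if s then (-1) ^ ((n - 1) div 3) else 0)) = 1) \<longleftrightarrow>
    ((n mod 12 \<in> {0, 2, 9, 11} \<and> c + dl \<le> (n + 1) div 2)
      \<or> (n mod 12 \<in> {3, 5, 6, 8} \<and> c + dl = (n + 1) div 2 + 1)
      \<or> (n mod 12 \<in> {1, 4} \<and> s))"
proof -
  obtain m where nm: "n = Suc m" using n2 by (cases n) auto
  define \<alpha> where "\<alpha> = (n + 1) div 2"
  have a2: "n \<le> 2 * \<alpha>" unfolding \<alpha>_def by (rule F5)
  have F1': "even \<alpha> \<longleftrightarrow> (n mod 4 = 0 \<or> n mod 4 = 3)" unfolding \<alpha>_def by (rule F1)
  have m4: "n mod 4 = n mod 12 mod 4" by (simp add: mod_mod_cancel)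
  have m6: "n mod 6 = n mod 12 mod 6" by (simp add: mod_mod_cancel)
  have m3: "n mod 3 = n mod 12 mod 3" by (simp add: mod_mod_cancel)
  have r12: "n mod 12 < 12" by simp
  have cw: "c + dl = w + 1" using wc by simp
  show ?thesis
  proof (cases s)
    case True
    have n3: "n mod 3 = 1" by (rule s3[OF True])
    have n4: "n \<ge> 4" using F6[OF n2 n3] .
    have "3 * (w + 1) = n + 2" using s1[OF True] s2[OF True] wc by simp
    then have "Suc w \<le> \<alpha>" using a2 n4 by (rule F7)
    then have d: "max \<alpha> (Suc w) = \<alpha>" by simp
    have mm: "(n - 1) div 3 = m div 3" using nm by simp
    have ev: "even (m div 3) \<longleftrightarrow> n mod 6 = 1"
      using F2[OF F3] F4 n3 nm by simp
    have "n mod 12 = 1 \<or> n mod 12 = 4 \<or> n mod 12 = 7 \<or> n mod 12 = 10"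
      using n3 m3 r12 by (cases "n mod 12") (simp_all, presburger?)
    then show ?thesis
      using True d mm ev F1' m4 m6 unfolding \<alpha>_def[symmetric]
      by (elim disjE) (simp_all add: pe_def minus_one_power_iff)
  next
    case False
    have "Suc w \<le> \<alpha> \<or> w = \<alpha>" using wa unfolding \<alpha>_def[symmetric] by linarith
    moreover have "n mod 12 = 0 \<or> n mod 12 = 1 \<or> n mod 12 = 2 \<or> n mod 12 = 3 \<or> n mod 12 = 4 \<or> n mod 12 = 5 \<or>
       n mod 12 = 6 \<or> n mod 12 = 7 \<or> n mod 12 = 8 \<or> n mod 12 = 9 \<or> n mod 12 = 10 \<or> n mod 12 = 11" by presburger
    ultimately show ?thesis
      using False F1' m4 m6 cw unfolding \<alpha>_def[symmetric]
      by (elim disjE) (auto simp: pe_def minus_one_power_iff max_def)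
  qed
qed

lemma neg1_pow_diff: "k \<le> d \<Longrightarrow> (-1::int) ^ (d - k) = (-1) ^ d * (-1) ^ k"
proof -
  assume "k \<le> d"
  then have "(-1::int) ^ d = (-1) ^ (d - k) * (-1) ^ k" by (metis le_add_diff_inverse2 power_add)
  then have "(-1::int) ^ d * (-1) ^ k = (-1) ^ (d - k) * ((-1) ^ k * (-1) ^ k)" by (simp add: mult.assoc)
  also have "(-1::int) ^ k * (-1) ^ k = 1" by (metis power_add power_minus1_even mult_2 [symmetric])
  finally show ?thesis by simp
qed

lemma MI_of_max:
  assumes "maximal_independent (path_V n) (path_E n) C"
  shows "MI n C"
proof -
  have ind: "C \<subseteq> {1..n}" and noe: "\<And>e. e \<in> path_E n \<Longrightarrow> \<not> e \<subseteq> C"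
    and mx: "\<And>S. independent (path_V n) (path_E n) S \<Longrightarrow> C \<subseteq> S \<Longrightarrow> S = C"
    using assms unfolding maximal_independent_def independent_def path_V_def by auto
  have edge: "{i, i + 1} \<in> path_E n" if "1 \<le> i" "i < n" for i
    unfolding path_E_def using that by blast
  have m2: "\<forall>i\<in>C. Suc i \<notin> C"
  proof (intro ballI notI)
    fix i assume i: "i \<in> C" and si: "Suc i \<in> C"
    have "1 \<le> i" "i < n" using i si ind by auto
    then have "{i, i + 1} \<in> path_E n" by (rule edge)
    moreover have "{i, i + 1} \<subseteq> C" using i si by simp
    ultimately show False using noe by blast
  qed
  have m3: "\<forall>i\<in>{1..n}. i \<in> C \<or> i - 1 \<in> C \<or> Suc i \<in> C"
  proof (rule ballI, rule ccontr)
    fix i assume i: "i \<in> {1..n}" and no: "\<not> (i \<in> C \<or> i - 1 \<in> C \<or> Suc i \<in> C)"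
    have "independent (path_V n) (path_E n) (insert i C)"
      unfolding independent_def
    proof (intro conjI ballI)
      show "insert i C \<subseteq> path_V n" using i ind unfolding path_V_def by auto
      fix e assume e: "e \<in> path_E n"
      then obtain j where j: "e = {j, j + 1}" unfolding path_E_def by blast
      show "\<not> e \<subseteq> insert i C"
      proof
        assume sub: "e \<subseteq> insert i C"
        then have jin: "j \<in> insert i C" and j1in: "Suc j \<in> insert i C" using j by auto
        show False
        proof (cases "j = i")
          case True
          then have "Suc i \<in> C" using j1in by simp
          then show False using no by blast
        next
          case False
          then have jC: "j \<in> C" using jin by simp
          show False
          proof (cases "Suc j = i")
            case True
            then have "i - 1 = j" by simp
            then show False using no jC by blast
          next
            case False
            then have "Suc j \<in> C" using j1in by simp
            then show False using m2 jC by blast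
          qed
        qed
      qed
    qed
    then have "insert i C = C" using mx by blast
    then show False using no by blast
  qed
  show ?thesis unfolding MI_def using ind m2 m3 by blast
qed

lemma indep_susp:
  assumes Csub: "C \<subseteq> {1..n}"
  shows "{S. independent (susp_V (path_V n)) (susp_E (path_E n) C) S} =
    image Some ` ind {1..n} \<union> (\<lambda>T. insert None (Some ` T)) ` ind ({1..n} - C)"
    (is "?L = ?A \<union> ?B")
proof (rule set_eqI, rule iffI)
  fix S assume "S \<in> ?L"
  then have Ssub: "S \<subseteq> insert None (Some ` {1..n})" and noe: "\<And>e. e \<in> susp_E (path_E n) C \<Longrightarrow> \<not> e \<subseteq> S"
    unfolding independent_def susp_V_def path_V_def by auto
  define T where "T = {i. Some i \<in> S}"
  have Tsub: "T \<subseteq> {1..n}" using Ssub unfolding T_def by auto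
  have Tind: "\<forall>i\<in>T. Suc i \<notin> T"
  proof (intro ballI notI)
    fix i assume i: "i \<in> T" and si: "Suc i \<in> T"
    have "1 \<le> i" "i < n" using i si Tsub by auto
    then have "{i, i + 1} \<in> path_E n" unfolding path_E_def by blast
    then have "Some ` {i, i + 1} \<in> susp_E (path_E n) C" unfolding susp_E_def by blast
    moreover have "Some ` {i, i + 1} \<subseteq> S" using i si unfolding T_def by simp
    ultimately show False using noe by blast
  qed
  have TP: "T \<in> ind {1..n}" using Tsub Tind unfolding ind_def by blast
  show "S \<in> ?A \<union> ?B"
  proof (cases "None \<in> S")
    case False
    have "S = Some ` T"
    proof (rule set_eqI)
      fix x show "x \<in> S \<longleftrightarrow> x \<in> Some ` T"
        using False unfolding T_def by (cases x) auto
    qed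
    then show ?thesis using TP by blast
  next
    case True
    have "S = insert None (Some ` T)"
    proof (rule set_eqI)
      fix x show "x \<in> S \<longleftrightarrow> x \<in> insert None (Some ` T)"
        using True unfolding T_def by (cases x) auto
    qed
    moreover have "T \<in> ind ({1..n} - C)"
    proof -
      have "T \<inter> C = {}"
      proof (rule ccontr)
        assume "T \<inter> C \<noteq> {}"
        then obtain c where c: "c \<in> T" "c \<in> C" by blast
        then have "{None, Some c} \<in> susp_E (path_E n) C" unfolding susp_E_def by blast
        moreover have "{None, Some c} \<subseteq> S" using True c unfolding T_def by simp
        ultimately show False using noe by blast
      qed
      then show ?thesis using Tsub Tind unfolding ind_def by blast
    qed
    ultimately show ?thesis by blast
  qed
next
  fix S assume S: "S \<in> ?A \<union> ?B"
  show "S \<in> ?L"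
  proof -
    obtain T N where ST: "S = (if N then insert None (Some ` T) else Some ` T)" and
      TP: "T \<in> ind {1..n}" and TC: "N \<Longrightarrow> T \<inter> C = {}"
    proof (cases "S \<in> ?A")
      case True
      then obtain T where "S = Some ` T" "T \<in> ind {1..n}" by blast
      then show ?thesis using that[of False T] by simp
    next
      case False
      then have "S \<in> ?B" using S by blast
      then obtain T where T: "S = insert None (Some ` T)" "T \<in> ind ({1..n} - C)" by blast
      have "T \<in> ind {1..n}" using T(2) unfolding ind_def by blast
      moreover have "T \<inter> C = {}" using T(2) unfolding ind_def by blast
      ultimately show ?thesis using that[of True T] T(1) by simp
    qed
    have Tsub: "T \<subseteq> {1..n}" and Tind: "\<And>i. i \<in> T \<Longrightarrow> Suc i \<notin> T" using TP unfolding ind_def by auto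
    have sub: "S \<subseteq> susp_V (path_V n)" using Tsub ST unfolding susp_V_def path_V_def by (auto split: if_splits)
    have "\<forall>e\<in>susp_E (path_E n) C. \<not> e \<subseteq> S"
    proof (intro ballI notI)
      fix e assume e: "e \<in> susp_E (path_E n) C" and es: "e \<subseteq> S"
      show False
      proof (cases "e \<in> (\<lambda>e. Some ` e) ` path_E n")
        case True
        then obtain i where ei: "e = Some ` {i, i + 1}" unfolding path_E_def by blast
        then have "Some i \<in> S" "Some (Suc i) \<in> S" using es by auto
        then have "i \<in> T" "Suc i \<in> T" using ST by (auto split: if_splits)
        then show False using Tind by blast
      next
        case False
        then obtain c where c: "e = {None, Some c}" "c \<in> C" using e unfolding susp_E_def by blast
        then have "None \<in> S" "Some c \<in> S" using es by auto
        then have "N" "c \<in> T" using ST by (auto split: if_splits)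
        then show False using TC c(2) by blast
      qed
    qed
    then show ?thesis using sub unfolding independent_def by blast
  qed
qed

theorem corollary7p4:
  fixes n :: nat and C :: "nat set"
  assumes "n \<ge> 2"
    and "maximal_independent (path_V n) (path_E n) C"
  shows "pseudo_gorenstein_star (susp_V (path_V n)) (susp_E (path_E n) C) \<longleftrightarrow>
    (let \<alpha> = (n + 1) div 2;
         c = card C;
         \<delta> = (if 1 \<in> C then 0 else 1) + (if n \<in> C then 0 else 1)
     in (n mod 12 \<in> {0, 2, 9, 11} \<and> c + \<delta> \<le> \<alpha>)
      \<or> (n mod 12 \<in> {3, 5, 6, 8} \<and> c + \<delta> = \<alpha> + 1)
      \<or> (n mod 12 \<in> {1, 4} \<and> C = {i. 1 \<le> i \<and> i \<le> n \<and> i mod 3 = 1}))"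
proof -
  let ?V = "susp_V (path_V n)" and ?E = "susp_E (path_E n) C"
  let ?P = "{1..n}" and ?W = "{1..n} - C"
  let ?A = "image Some ` ind ?P" and ?B = "(\<lambda>T. insert None (Some ` T)) ` ind ?W"
  have MIC: "MI n C" by (rule MI_of_max[OF assms(2)])
  have Csub: "C \<subseteq> {1..n}" using MIC unfolding MI_def by blast
  have finV: "finite ?V" unfolding susp_V_def path_V_def by simp
  have IG: "{S. independent ?V ?E S} = ?A \<union> ?B" by (rule indep_susp[OF Csub])
  have finP: "finite ?P" and finW: "finite ?W" by auto
  have fA: "finite ?A" and fB: "finite ?B" using finite_ind[OF finP] finite_ind[OF finW] by auto
  have disj: "?A \<inter> ?B = {}" by auto
  have injA: "inj_on (image Some) (ind ?P)" by (rule inj_onI) (simp add: inj_image_eq_iff)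
  have injB: "inj_on (\<lambda>T. insert None (Some ` T)) (ind ?W)"
  proof (rule inj_onI)
    fix T T' assume "insert None (Some ` T) = insert None (Some ` (T' :: nat set))"
    then have "Some ` T = Some ` T'"
      by (metis (no_types, lifting) Diff_insert_absorb image_iff option.distinct(1))
    then show "T = T'" by (simp add: inj_image_eq_iff)
  qed
  have cA: "card (Some ` T) = card T" for T :: "nat set" by (simp add: card_image)
  have cB: "card (insert None (Some ` T)) = Suc (card T)" if "T \<in> ind ?W" for T
  proof -
    have "finite T" using that finW unfolding ind_def by (auto dest: finite_subset)
    then show ?thesis by (simp add: card_image)
  qed
  define d where "d = indep_number ?V ?E"
  have d_eq: "d = max (aa ?P) (Suc (aa ?W))"
  proof -
    obtain SP where SP: "SP \<in> ind ?P" "card SP = aa ?P" using aa_props(1)[OF finP] by blast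
    obtain SW where SW: "SW \<in> ind ?W" "card SW = aa ?W" using aa_props(1)[OF finW] by blast
    have "Max (card ` (?A \<union> ?B)) = max (aa ?P) (Suc (aa ?W))"
    proof (rule Max_eqI)
      show "finite (card ` (?A \<union> ?B))" using fA fB by simp
      fix y assume "y \<in> card ` (?A \<union> ?B)"
      then obtain S where S: "S \<in> ?A \<union> ?B" "y = card S" by blast
      then show "y \<le> max (aa ?P) (Suc (aa ?W))"
      proof (cases "S \<in> ?A")
        case True
        then obtain T where "S = Some ` T" "T \<in> ind ?P" by blast
        then show ?thesis using S(2) cA aa_props(2)[OF finP] by fastforce
      next
        case False
        then obtain T where T: "S = insert None (Some ` T)" "T \<in> ind ?W" using S(1) by blast
        then have "y = Suc (card T)" using S(2) cB by simp
        then show ?thesis using aa_props(2)[OF finW T(2)] by simp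
      qed
    next
      show "max (aa ?P) (Suc (aa ?W)) \<in> card ` (?A \<union> ?B)"
      proof (cases "aa ?P \<le> Suc (aa ?W)")
        case True
        have "insert None (Some ` SW) \<in> ?A \<union> ?B" using SW by blast
        moreover have "card (insert None (Some ` SW)) = Suc (aa ?W)" using cB SW by simp
        ultimately show ?thesis using True by (metis image_eqI max_absorb2)
      next
        case False
        have "Some ` SP \<in> ?A \<union> ?B" using SP by blast
        moreover have "card (Some ` SP) = aa ?P" using cA SP by simp
        ultimately show ?thesis using False by (metis image_eqI max_def)
      qed
    qed
    then show ?thesis unfolding d_def indep_number_def IG .
  qed
  have sum_eq: "(\<Sum>F\<in>{S. independent ?V ?E S}. (-1::int) ^ (d - card F)) = (-1) ^ d * (ee ?P - ee ?W)"
  proof -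
    have "(\<Sum>F\<in>{S. independent ?V ?E S}. (-1::int) ^ (d - card F)) =
        (\<Sum>F\<in>{S. independent ?V ?E S}. (-1) ^ d * (-1) ^ card F)"
    proof (rule sum.cong[OF refl])
      fix F assume "F \<in> {S. independent ?V ?E S}"
      then have "card F \<le> d" unfolding d_def using card_le_indep_number[OF finV] by blast
      then show "(-1::int) ^ (d - card F) = (-1) ^ d * (-1) ^ card F" by (rule neg1_pow_diff)
    qed
    also have "\<dots> = (-1) ^ d * (\<Sum>F\<in>?A \<union> ?B. (-1) ^ card F)" unfolding IG by (simp add: sum_distrib_left)
    also have "(\<Sum>F\<in>?A \<union> ?B. (-1::int) ^ card F) = (\<Sum>F\<in>?A. (-1) ^ card F) + (\<Sum>F\<in>?B. (-1) ^ card F)"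
      using fA fB disj by (rule sum.union_disjoint)
    also have "(\<Sum>F\<in>?A. (-1::int) ^ card F) = ee ?P"
      unfolding ee_def using sum.reindex[OF injA, of "\<lambda>F. (-1::int) ^ card F"] cA by simp
    also have "(\<Sum>F\<in>?B. (-1::int) ^ card F) = - ee ?W"
    proof -
      have "(\<Sum>F\<in>?B. (-1::int) ^ card F) = (\<Sum>T\<in>ind ?W. (-1) ^ card (insert None (Some ` T)))"
        using sum.reindex[OF injB, of "\<lambda>F. (-1::int) ^ card F"] by simp
      also have "\<dots> = (\<Sum>T\<in>ind ?W. - ((-1) ^ card T))"
        by (rule sum.cong[OF refl]) (simp add: cB)
      finally show ?thesis unfolding ee_def by (simp add: sum_negf)
    qed
    finally show ?thesis by simp
  qed
  have PV: "aa ?P = (n + 1) div 2 \<and> ee ?P = pe n" by (rule path_vals)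
  have MV: "aa ?W + 1 = card C + dl n C \<and>
     ee ?W = (if sp n C then (-1) ^ ((n - 1) div 3) else 0) \<and>
     (sp n C \<longrightarrow> 3 * card C = n + 2)" using main_ind[OF _ MIC] assms(1) by simp
  have wle: "aa ?W \<le> (n + 1) div 2" using aa_mono[OF finP, of ?W] PV by auto
  have s2: "dl n C = 0" if "sp n C"
  proof -
    have "n mod 3 = 1" "C = {i. 1 \<le> i \<and> i \<le> n \<and> i mod 3 = 1}" using that unfolding sp_def by auto
    then have "1 \<in> C" "n \<in> C" using assms(1) by auto
    then show ?thesis unfolding dl_def by simp
  qed
  have s3: "n mod 3 = 1" if "sp n C" using that unfolding sp_def by auto
  have s1: "3 * card C = n + 2" if "sp n C" using that MV by blast
  note FIN = final[OF assms(1) conjunct1[OF MV] wle s1 s2 s3]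
  have LHS: "pseudo_gorenstein_star ?V ?E \<longleftrightarrow>
     ((-1::int) ^ (max ((n + 1) div 2) (Suc (aa ?W))) * (pe n - (if sp n C then (-1) ^ ((n - 1) div 3) else 0)) = 1)"
  proof -
    have "pseudo_gorenstein_star ?V ?E \<longleftrightarrow> (\<Sum>F\<in>{S. independent ?V ?E S}. (-1::int) ^ (d - card F)) = 1"
      unfolding d_def by (rule pg_iff[OF finV])
    also have "\<dots> \<longleftrightarrow> (-1) ^ d * (ee ?P - ee ?W) = 1" unfolding sum_eq ..
    finally show ?thesis unfolding d_eq using PV MV by simp
  qed
  have m3: "n mod 3 = n mod 12 mod 3" by (simp add: mod_mod_cancel)
  have spc: "(n mod 12 \<in> {1, 4} \<and> sp n C) \<longleftrightarrow> (n mod 12 \<in> {1, 4} \<and> C = {i. 1 \<le> i \<and> i \<le> n \<and> i mod 3 = 1})"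
  proof -
    have m31: "n mod 3 = 1" if "n mod 12 \<in> {1, 4}"
    proof -
      from that have "n mod 12 = 1 \<or> n mod 12 = 4" by simp
      then show ?thesis using m3 by (elim disjE) simp_all
    qed
    show ?thesis
    proof (rule iffI)
      assume h: "n mod 12 \<in> {1, 4} \<and> sp n C"
      from h have a: "n mod 12 \<in> {1, 4}" by (rule conjunct1)
      from h have b: "sp n C" by (rule conjunct2)
      from b have c: "C = {i. 1 \<le> i \<and> i \<le> n \<and> i mod 3 = 1}" unfolding sp_def by (rule conjunct2)
      from a c show "n mod 12 \<in> {1, 4} \<and> C = {i. 1 \<le> i \<and> i \<le> n \<and> i mod 3 = 1}" by (rule conjI)
    next
      assume h: "n mod 12 \<in> {1, 4} \<and> C = {i. 1 \<le> i \<and> i \<le> n \<and> i mod 3 = 1}"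
      from h have a: "n mod 12 \<in> {1, 4}" by (rule conjunct1)
      from h have c: "C = {i. 1 \<le> i \<and> i \<le> n \<and> i mod 3 = 1}" by (rule conjunct2)
      have "sp n C" unfolding sp_def using m31[OF a] c by (rule conjI)
      with a show "n mod 12 \<in> {1, 4} \<and> sp n C" by (rule conjI)
    qed
  qed
  have R: "(let \<alpha> = (n + 1) div 2;
         c = card C;
         \<delta> = (if 1 \<in> C then 0 else 1) + (if n \<in> C then 0 else 1)
     in (n mod 12 \<in> {0, 2, 9, 11} \<and> c + \<delta> \<le> \<alpha>)
      \<or> (n mod 12 \<in> {3, 5, 6, 8} \<and> c + \<delta> = \<alpha> + 1)
      \<or> (n mod 12 \<in> {1, 4} \<and> C = {i. 1 \<le> i \<and> i \<le> n \<and> i mod 3 = 1})) \<longleftrightarrow>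
    ((n mod 12 \<in> {0, 2, 9, 11} \<and> card C + dl n C \<le> (n + 1) div 2)
      \<or> (n mod 12 \<in> {3, 5, 6, 8} \<and> card C + dl n C = (n + 1) div 2 + 1)
      \<or> (n mod 12 \<in> {1, 4} \<and> sp n C))"
    unfolding Let_def dl_def spc ..
  have G1: "pseudo_gorenstein_star ?V ?E \<longleftrightarrow>
    ((n mod 12 \<in> {0, 2, 9, 11} \<and> card C + dl n C \<le> (n + 1) div 2)
      \<or> (n mod 12 \<in> {3, 5, 6, 8} \<and> card C + dl n C = (n + 1) div 2 + 1)
      \<or> (n mod 12 \<in> {1, 4} \<and> sp n C))" using LHS FIN by (rule trans)
  show ?thesis unfolding R by (rule G1)
qed

end
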